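(* Let $\{X_t\}_{t\ge1}$ be generated by random shuffling over $[n]$: time is split into consecutive epochs of length $n$, and in each epoch the sequence traverses a permutation of $[n]$ drawn uniformly at random, independently across epochs. Define the augmented process $s_t=(\{A^{(t)}_j\}_{j\in[n]},c_t)$, where $\{A^{(t)}_j\}_{j\in[n]}=(X_{t-n+1},X_{t-n+2},\dots,X_t)$ is the history of the last $n$ indices up to time $t$ and $c_t\in\{1,\dots,n\}$ is the position of time $t$ within its current epoch, with state space $\mathcal S$ consisting of all proper pairs (those that can occur under random shuffling). Then $\{s_t\}$ is a finite, irreducible and periodic Markov chain with period $n$.
   Context: A pair $(\{A_j\}_{j\in[n]},c)$ is proper if the sequence $A_1,\dots,A_n$ together with the epoch position $c$ is consistent with shuffling without replacement, i.e. its last $c$ entries are distinct and form the beginning of an epoch, and its first $n-c$ entries are distinct and form the end of the previous epoch. *)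

theory Defs
  imports "HOL-Probability.Probability"
begin

definition perms :: "nat \<Rightarrow> nat list set" where
  "perms n = {p. distinct p \<and> set p = {1..n}}"

fun shuffling :: "nat \<Rightarrow> nat \<Rightarrow> nat list pmf" where
  "shuffling n 0 = return_pmf []"
| "shuffling n (Suc m) =
     bind_pmf (shuffling n m) (\<lambda>xs. bind_pmf (pmf_of_set (perms n)) (\<lambda>p. return_pmf (xs @ p)))"

text \<open>X_t (1-indexed) of a realisation xs.\<close>
definition X :: "nat list \<Rightarrow> nat \<Rightarrow> nat" where
  "X xs t = xs ! (t - 1)"

text \<open>Augmented state s_t = ((X_{t-n+1},...,X_t), c_t), defined for t \<ge> n;
  c_t \<in> {1..n} is the position of time t in its epoch.\<close>
definition aug_state :: "nat \<Rightarrow> nat list \<Rightarrow> nat \<Rightarrow> nat list \<times> nat" where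
  "aug_state n xs t = (map (\<lambda>j. X xs (t - n + j)) [1..<n+1], (t - 1) mod n + 1)"

definition proper :: "nat \<Rightarrow> nat list \<times> nat \<Rightarrow> bool" where
  "proper n s = (case s of (A, c) \<Rightarrow>
     length A = n \<and> set A \<subseteq> {1..n} \<and> c \<in> {1..n} \<and>
     distinct (drop (n - c) A) \<and> distinct (take (n - c) A))"

definition state_space :: "nat \<Rightarrow> (nat list \<times> nat) set" where
  "state_space n = {s. proper n s}"

fun kstep :: "('s \<Rightarrow> 's \<Rightarrow> real) \<Rightarrow> 's set \<Rightarrow> nat \<Rightarrow> 's \<Rightarrow> 's \<Rightarrow> real" where
  "kstep K S 0 x y = (if x = y then 1 else 0)"
| "kstep K S (Suc k) x y = (\<Sum>z\<in>S. kstep K S k x z * K z y)"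

definition stochastic_on :: "('s \<Rightarrow> 's \<Rightarrow> real) \<Rightarrow> 's set \<Rightarrow> bool" where
  "stochastic_on K S = (\<forall>x\<in>S. (\<forall>y\<in>S. K x y \<ge> 0) \<and> (\<Sum>y\<in>S. K x y) = 1)"

definition irreducible_on :: "('s \<Rightarrow> 's \<Rightarrow> real) \<Rightarrow> 's set \<Rightarrow> bool" where
  "irreducible_on K S = (\<forall>x\<in>S. \<forall>y\<in>S. \<exists>k. kstep K S k x y > 0)"

definition period :: "('s \<Rightarrow> 's \<Rightarrow> real) \<Rightarrow> 's set \<Rightarrow> 's \<Rightarrow> nat" where
  "period K S x = Gcd {k. k > 0 \<and> kstep K S k x x > 0}"

text \<open>The process (s_t)_{t\<ge>n} is a (time-homogeneous) Markov chain on S with kernel K: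
  s_t \<in> S almost surely, and path probabilities factor through K.
  The finite horizon m (number of epochs simulated) is arbitrary as long as it covers the times.\<close>
definition markov_with :: "nat \<Rightarrow> (nat list \<times> nat \<Rightarrow> nat list \<times> nat \<Rightarrow> real) \<Rightarrow> bool" where
  "markov_with n K =
    ((\<forall>m t. n \<le> t \<longrightarrow> t \<le> m * n \<longrightarrow>
        measure_pmf.prob (shuffling n m) {xs. aug_state n xs t \<in> state_space n} = 1) \<and>
     (\<forall>m t y. n \<le> t \<longrightarrow> t + 1 \<le> m * n \<longrightarrow>
        measure_pmf.prob (shuffling n m) {xs. \<forall>i\<in>{n..t+1}. aug_state n xs i = y i}
        = measure_pmf.prob (shuffling n m) {xs. \<forall>i\<in>{n..t}. aug_state n xs i = y i}
          * K (y t) (y (t+1))))"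

end

theory Submission
  imports Defs "HOL-Combinatorics.Multiset_Permutations"
begin


lemma perms_finite: "finite (perms n)"
proof -
  have "perms n \<subseteq> {xs. set xs \<subseteq> {1..n} \<and> length xs = n}"
    unfolding perms_def using distinct_card by fastforce
  moreover have "finite {xs. set xs \<subseteq> {1..n} \<and> length xs = n}"
    by (rule finite_lists_length_eq) simp
  ultimately show ?thesis by (rule finite_subset)
qed

lemma perms_ne: "perms n \<noteq> {}"
proof -
  have "[1..<n+1] \<in> perms n" unfolding perms_def by auto
  thus ?thesis by auto
qed

lemma perms_length: "p \<in> perms n \<Longrightarrow> length p = n"
  unfolding perms_def using distinct_card by fastforce

lemma shuffling_Suc_pair:
  "shuffling n (Suc m) = map_pmf (\<lambda>(xs,p). xs @ p) (pair_pmf (shuffling n m) (pmf_of_set (perms n)))"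
  by (simp add: pair_pmf_def map_pmf_def bind_assoc_pmf bind_return_pmf)

lemma set_shuffling:
  "set_pmf (shuffling n m) = {concat ps | ps. length ps = m \<and> set ps \<subseteq> perms n}"
proof (induction m)
  case 0
  then show ?case by auto
next
  case (Suc m)
  have "set_pmf (shuffling n (Suc m)) = (\<Union>xs\<in>set_pmf (shuffling n m). \<Union>p\<in>perms n. {xs @ p})"
    using perms_finite perms_ne by (simp add: set_bind_pmf)
  also have "\<dots> = {concat ps | ps. length ps = Suc m \<and> set ps \<subseteq> perms n}"
  proof (intro equalityI subsetI)
    fix zs assume "zs \<in> (\<Union>xs\<in>set_pmf (shuffling n m). \<Union>p\<in>perms n. {xs @ p})"
    then obtain ps p where "length ps = m" "set ps \<subseteq> perms n" "p \<in> perms n" "zs = concat ps @ p"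
      using Suc by auto
    thus "zs \<in> {concat ps | ps. length ps = Suc m \<and> set ps \<subseteq> perms n}"
      by (intro CollectI exI[of _ "ps @ [p]"]) auto
  next
    fix zs assume "zs \<in> {concat ps | ps. length ps = Suc m \<and> set ps \<subseteq> perms n}"
    then obtain ps where ps: "length ps = Suc m" "set ps \<subseteq> perms n" "zs = concat ps" by auto
    then obtain qs p where "ps = qs @ [p]" by (metis length_Suc_conv_rev)
    with ps show "zs \<in> (\<Union>xs\<in>set_pmf (shuffling n m). \<Union>p\<in>perms n. {xs @ p})"
      using Suc by auto
  qed
  finally show ?case .
qed

lemma length_concat_perms: "set ps \<subseteq> perms n \<Longrightarrow> length (concat ps) = length ps * n"
  by (induction ps) (auto simp: perms_length)

lemma shuffling_length: "xs \<in> set_pmf (shuffling n m) \<Longrightarrow> length xs = m * n"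
  using length_concat_perms by (auto simp: set_shuffling)

lemma shuffling_set: "xs \<in> set_pmf (shuffling n m) \<Longrightarrow> set xs \<subseteq> {1..n}"
proof
  fix x assume "xs \<in> set_pmf (shuffling n m)" "x \<in> set xs"
  then obtain ps p where "set ps \<subseteq> perms n" "p \<in> set ps" "x \<in> set p"
    by (auto simp: set_shuffling)
  thus "x \<in> {1..n}" unfolding perms_def by blast
qed

definition P :: "nat \<Rightarrow> nat \<Rightarrow> nat list \<Rightarrow> real" where
  "P n m w = measure_pmf.prob (shuffling n m) {xs. take (length w) xs = w}"

definition R :: "nat \<Rightarrow> nat list \<Rightarrow> real" where
  "R n u = measure_pmf.prob (pmf_of_set (perms n)) {p. take (length u) p = u}"

lemma P_Suc_low:
  assumes "length w \<le> m * n"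
  shows "P n (Suc m) w = P n m w"
proof -
  let ?M = "shuffling n m" and ?U = "pmf_of_set (perms n)"
  let ?k = "length w"
  have "P n (Suc m) w = measure_pmf.prob (pair_pmf ?M ?U) {(xs,p). take ?k (xs @ p) = w}"
    unfolding P_def shuffling_Suc_pair measure_map_pmf
    by (rule arg_cong[where f="measure_pmf.prob _"]) auto
  also have "\<dots> = measure_pmf.prob (pair_pmf ?M ?U) ({(xs,p). take ?k (xs @ p) = w} \<inter> set_pmf (pair_pmf ?M ?U))"
    by (rule measure_Int_set_pmf[symmetric])
  also have "{(xs,p). take ?k (xs @ p) = w} \<inter> set_pmf (pair_pmf ?M ?U)
      = ({xs. take ?k xs = w} \<times> UNIV) \<inter> set_pmf (pair_pmf ?M ?U)"
    using assms by (auto dest: shuffling_length)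
  also have "measure_pmf.prob (pair_pmf ?M ?U) \<dots> = measure_pmf.prob (pair_pmf ?M ?U) ({xs. take ?k xs = w} \<times> UNIV)"
    by (rule measure_Int_set_pmf)
  also have "\<dots> = P n m w"
    by (subst measure_pmf_prob_product) (auto simp: P_def)
  finally show ?thesis .
qed

lemma P_mono_m:
  assumes "length w \<le> m' * n" "m' \<le> m"
  shows "P n m w = P n m' w"
  using assms(2)
proof (induction m)
  case 0 then show ?case by simp
next
  case (Suc m)
  show ?case
  proof (cases "m' = Suc m")
    case False
    with Suc have "m' \<le> m" by simp
    moreover have "length w \<le> m * n" using assms(1) \<open>m' \<le> m\<close>
      by (meson le_trans mult_le_mono1)
    ultimately show ?thesis using Suc P_Suc_low by simp
  qed simp
qed

lemma P_Suc_high: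
  assumes "m * n \<le> length w" "length w \<le> Suc m * n"
  shows "P n (Suc m) w = P n m (take (m*n) w) * R n (drop (m*n) w)"
proof -
  let ?M = "shuffling n m" and ?U = "pmf_of_set (perms n)"
  let ?k = "length w"
  have "P n (Suc m) w = measure_pmf.prob (pair_pmf ?M ?U) {(xs,p). take ?k (xs @ p) = w}"
    unfolding P_def shuffling_Suc_pair measure_map_pmf
    by (rule arg_cong[where f="measure_pmf.prob _"]) auto
  also have "\<dots> = measure_pmf.prob (pair_pmf ?M ?U) ({(xs,p). take ?k (xs @ p) = w} \<inter> set_pmf (pair_pmf ?M ?U))"
    by (rule measure_Int_set_pmf[symmetric])
  also have "{(xs,p). take ?k (xs @ p) = w} \<inter> set_pmf (pair_pmf ?M ?U)
      = ({xs. take (m*n) xs = take (m*n) w} \<times> {p. take (length (drop (m*n) w)) p = drop (m*n) w}) \<inter> set_pmf (pair_pmf ?M ?U)"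
  proof -
    have "take ?k (xs @ p) = w \<longleftrightarrow> take (m*n) xs = take (m*n) w \<and> take (length (drop (m*n) w)) p = drop (m*n) w"
      if "length xs = m * n" for xs p :: "nat list"
    proof -
      have "take ?k (xs @ p) = xs @ take (?k - m*n) p" using that assms by simp
      moreover have "w = take (m*n) w @ drop (m*n) w" by simp
      ultimately show ?thesis using that assms
        by (metis append_eq_append_conv length_drop length_take min.absorb2 take_all_iff order.refl)
    qed
    thus ?thesis by (auto dest: shuffling_length)
  qed
  also have "measure_pmf.prob (pair_pmf ?M ?U) \<dots> = measure_pmf.prob (pair_pmf ?M ?U) ({xs. take (m*n) xs = take (m*n) w} \<times> {p. take (length (drop (m*n) w)) p = drop (m*n) w})"
    by (rule measure_Int_set_pmf)
  also have "\<dots> = P n m (take (m*n) w) * R n (drop (m*n) w)"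
    using assms by (subst measure_pmf_prob_product) (auto simp: P_def R_def min_def)
  finally show ?thesis .
qed


lemma perms_eq: "perms n = permutations_of_set {1..n}"
  unfolding perms_def permutations_of_set_def by auto

lemma card_perms: "card (perms n) = fact n"
  by (simp add: perms_eq card_permutations_of_set)

lemma card_prefix:
  assumes "length u \<le> n"
  shows "card (perms n \<inter> {p. take (length u) p = u}) =
    (if distinct u \<and> set u \<subseteq> {1..n} then fact (n - length u) else 0)"
proof (cases "distinct u \<and> set u \<subseteq> {1..n}")
  case True
  have "perms n \<inter> {p. take (length u) p = u} = (\<lambda>q. u @ q) ` permutations_of_set ({1..n} - set u)"
  proof (intro equalityI subsetI)
    fix p assume "p \<in> perms n \<inter> {p. take (length u) p = u}"
    hence p: "distinct p" "set p = {1..n}" "take (length u) p = u" by (auto simp: perms_def)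
    have "p = u @ drop (length u) p" using p(3) by (metis append_take_drop_id)
    moreover have "drop (length u) p \<in> permutations_of_set ({1..n} - set u)"
    proof -
      have d: "distinct (u @ drop (length u) p)" using p(1) \<open>p = u @ drop (length u) p\<close> by simp
      have "set (u @ drop (length u) p) = {1..n}" using p(2) \<open>p = u @ drop (length u) p\<close> by simp
      with d show ?thesis unfolding permutations_of_set_def by auto
    qed
    ultimately show "p \<in> (\<lambda>q. u @ q) ` permutations_of_set ({1..n} - set u)" by blast
  next
    fix p assume "p \<in> (\<lambda>q. u @ q) ` permutations_of_set ({1..n} - set u)"
    then obtain q where "p = u @ q" "set q = {1..n} - set u" "distinct q"
      by (auto simp: permutations_of_set_def)
    thus "p \<in> perms n \<inter> {p. take (length u) p = u}"
      using True by (auto simp: perms_def)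
  qed
  moreover have "card ((\<lambda>q. u @ q) ` permutations_of_set ({1..n} - set u)) = fact (n - length u)"
  proof -
    have "card ((\<lambda>q. u @ q) ` permutations_of_set ({1..n} - set u)) = card (permutations_of_set ({1..n} - set u))"
      by (rule card_image) (simp add: inj_on_def)
    also have "\<dots> = fact (card ({1..n} - set u))" by (simp add: card_permutations_of_set)
    also have "card ({1..n} - set u) = n - length u"
      using True by (simp add: card_Diff_subset distinct_card)
    finally show ?thesis .
  qed
  ultimately show ?thesis using True by simp
next
  case False
  have "perms n \<inter> {p. take (length u) p = u} = {}"
  proof (rule ccontr)
    assume "perms n \<inter> {p. take (length u) p = u} \<noteq> {}"
    then obtain p where "distinct p" "set p = {1..n}" "take (length u) p = u" by (auto simp: perms_def)
    thus False using False by (metis distinct_take set_take_subset)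
  qed
  thus ?thesis using False by simp
qed

lemma R_eq:
  assumes "length u \<le> n"
  shows "R n u = (if distinct u \<and> set u \<subseteq> {1..n} then fact (n - length u) / fact n else 0)"
  unfolding R_def using perms_finite perms_ne card_prefix[OF assms]
  by (simp add: measure_pmf_of_set card_perms)

lemma R_snoc:
  assumes "length u < n"
  shows "R n (u @ [a]) = R n u * (if a \<in> {1..n} - set u then 1 / real (n - length u) else 0)"
proof -
  have f: "(fact (n - length u) :: real) = real (n - length u) * fact (n - Suc (length u))"
    using assms by (metis Suc_diff_Suc fact_Suc of_nat_fact)
  have "real (n - length u) > 0" using assms by simp
  then show ?thesis
    using assms by (auto simp: R_eq f)
qed


lemma P_snoc_raw:
  assumes "length w = t" "t + 1 \<le> m * n"
  shows "P n m (w @ [a]) = P n m w *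
    (if a \<in> {1..n} - set (drop (t div n * n) w) then 1 / real (n - t mod n) else 0)"
proof -
  have n0: "n > 0" using assms(2) by (metis add_is_0 gr0I mult_0_right le_zero_eq one_neq_zero)
  define q where "q = t div n"
  have q1: "q * n \<le> t" unfolding q_def by (simp add: div_times_less_eq_dividend)
  have q2: "t < Suc q * n" unfolding q_def using n0
    by (metis add.commute dividend_less_div_times mult_Suc)
  have "q < m" unfolding q_def using assms(2) by (intro less_mult_imp_div_less) simp
  hence q3: "Suc q \<le> m" by simp
  have tm: "t - q * n = t mod n" unfolding q_def by (simp add: minus_div_mult_eq_mod)
  have e1: "P n m (w @ [a]) = P n (Suc q) (w @ [a])"
    using assms q2 q3 by (intro P_mono_m) auto
  have e2: "P n (Suc q) (w @ [a]) = P n q (take (q*n) w) * R n (drop (q*n) w @ [a])"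
    using assms q1 q2 by (subst P_Suc_high) auto
  have e3: "R n (drop (q*n) w @ [a]) = R n (drop (q*n) w) *
      (if a \<in> {1..n} - set (drop (q*n) w) then 1 / real (n - t mod n) else 0)"
    using assms tm q2 n0 by (subst R_snoc) (auto simp: mod_less_divisor)
  have e4: "P n m w = P n (Suc q) w"
    using assms q2 q3 by (intro P_mono_m) auto
  have e5: "P n (Suc q) w = P n q (take (q*n) w) * R n (drop (q*n) w)"
    using assms q1 q2 by (subst P_Suc_high) auto
  show ?thesis unfolding q_def[symmetric] e1 e2 e3 e4 e5 by simp
qed



definition U :: "nat \<Rightarrow> nat \<Rightarrow> nat list set" where
  "U n k = {w. set w \<subseteq> {1..n} \<and> length w = k}"

lemma U_finite: "finite (U n k)"
  unfolding U_def by (rule finite_lists_length_eq) simp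

lemma prob_take_sum:
  assumes "k \<le> m * n"
  shows "measure_pmf.prob (shuffling n m) {xs. take k xs \<in> F} = (\<Sum>w\<in>U n k \<inter> F. P n m w)"
proof -
  let ?M = "shuffling n m"
  let ?Q = "map_pmf (take k) ?M"
  have sQ: "set_pmf ?Q \<subseteq> U n k"
  proof
    fix w assume "w \<in> set_pmf ?Q"
    then obtain xs where xs: "xs \<in> set_pmf ?M" "w = take k xs" by auto
    have "length w = k" using xs assms shuffling_length[OF xs(1)] by simp
    moreover have "set w \<subseteq> {1..n}" using order_trans[OF set_take_subset shuffling_set[OF xs(1)]] xs(2) by simp
    ultimately show "w \<in> U n k" by (simp add: U_def)
  qed
  have "measure_pmf.prob ?M {xs. take k xs \<in> F} = measure_pmf.prob ?Q F"
    by (simp only: measure_map_pmf vimage_def mem_Collect_eq)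
  also have "\<dots> = measure_pmf.prob ?Q (F \<inter> set_pmf ?Q)" by (rule measure_Int_set_pmf[symmetric])
  also have "F \<inter> set_pmf ?Q = (U n k \<inter> F) \<inter> set_pmf ?Q" using sQ by auto
  also have "measure_pmf.prob ?Q \<dots> = measure_pmf.prob ?Q (U n k \<inter> F)" by (rule measure_Int_set_pmf)
  also have "\<dots> = (\<Sum>w\<in>U n k \<inter> F. pmf ?Q w)"
    using U_finite by (intro measure_measure_pmf_finite) simp
  also have "\<dots> = (\<Sum>w\<in>U n k \<inter> F. P n m w)"
  proof (rule sum.cong)
    fix w assume "w \<in> U n k \<inter> F"
    hence "length w = k" by (simp add: U_def)
    thus "pmf ?Q w = P n m w"
      unfolding pmf_map P_def by (simp add: vimage_def)
  qed simp
  finally show ?thesis .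
qed



lemma aug_window:
  assumes "n \<le> t" "t \<le> length xs"
  shows "aug_state n xs t = (take n (drop (t - n) xs), (t - 1) mod n + 1)"
proof -
  have "map (\<lambda>j. X xs (t - n + j)) [1..<n+1] = take n (drop (t - n) xs)"
  proof (rule nth_equalityI)
    show "length (map (\<lambda>j. X xs (t - n + j)) [1..<n+1]) = length (take n (drop (t - n) xs))"
      using assms by simp
  next
    fix i assume "i < length (map (\<lambda>j. X xs (t - n + j)) [1..<n+1])"
    hence i: "i < n" by (simp del: upt_Suc)
    have "[1..<n+1] ! i = Suc i" using i by (simp add: nth_upt del: upt_Suc)
    thus "map (\<lambda>j. X xs (t - n + j)) [1..<n+1] ! i = take n (drop (t - n) xs) ! i"
      using i assms by (simp add: X_def del: upt_Suc)
  qed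
  thus ?thesis by (simp add: aug_state_def)
qed

lemma aug_take:
  assumes "n \<le> i" "i \<le> k"
  shows "aug_state n (take k xs) i = aug_state n xs i"
proof -
  have "X (take k xs) (i - n + j) = X xs (i - n + j)" if "j \<in> set [1..<n+1]" for j
    using that assms by (auto simp: X_def)
  thus ?thesis unfolding aug_state_def by (simp cong: map_cong)
qed

definition avail :: "nat \<Rightarrow> nat list \<times> nat \<Rightarrow> nat set" where
  "avail n s = {1..n} - (if snd s = n then {} else set (drop (n - snd s) (fst s)))"

definition nxt :: "nat \<Rightarrow> nat list \<times> nat \<Rightarrow> nat \<Rightarrow> nat list \<times> nat" where
  "nxt n s a = (tl (fst s) @ [a], snd s mod n + 1)"

definition rate :: "nat \<Rightarrow> nat list \<times> nat \<Rightarrow> real" where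
  "rate n s = 1 / real (n - snd s mod n)"

definition Kn :: "nat \<Rightarrow> nat list \<times> nat \<Rightarrow> nat list \<times> nat \<Rightarrow> real" where
  "Kn n s s' = (if s' \<in> nxt n s ` avail n s then rate n s else 0)"

lemma mod_pred':
  assumes "0 < t" shows "Suc ((t - Suc 0) mod n) mod n = t mod n"
proof -
  have "Suc ((t - Suc 0) mod n) mod n = Suc (t - Suc 0) mod n" by (rule mod_Suc_eq)
  thus ?thesis using assms by simp
qed

lemma mod_pred: "0 < (t::nat) \<Longrightarrow> ((t - 1) mod n + 1) mod n = t mod n"
  using mod_pred'[of t n] by simp

lemma aug_snoc:
  assumes "length w = t" "n \<le> t" "0 < n"
  shows "aug_state n (w @ [a]) (Suc t) = nxt n (aug_state n w t) a"
proof -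
  have "take n (drop (Suc t - n) (w @ [a])) = tl (take n (drop (t - n) w)) @ [a]"
  proof -
    have "Suc t - n = Suc (t - n)" using assms by simp
    moreover have "length (drop (Suc (t - n)) w) = n - 1" using assms by simp
    ultimately show ?thesis using assms
      by (simp add: drop_Suc tl_drop take_all tl_take)
  qed
  moreover have "Suc t - 1 = t" by simp
  ultimately show ?thesis using assms
    by (simp add: aug_window nxt_def mod_pred')
qed

lemma avail_aug:
  assumes "length w = t" "n \<le> t" "0 < n"
  shows "avail n (aug_state n w t) = {1..n} - set (drop (t div n * n) w)"
proof (cases "(t - 1) mod n + 1 = n")
  case True
  hence "t mod n = 0" using mod_pred[of t n] assms by simp
  hence "t div n * n = t" by (metis minus_mod_eq_div_mult minus_nat.diff_0)
  then show ?thesis using assms True by (simp add: aug_window avail_def)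
next
  case False
  define c where "c = (t - 1) mod n + 1"
  have c1: "c < n" using False assms unfolding c_def
    by (metis Suc_eq_plus1 Suc_leI le_neq_implies_less mod_less_divisor)
  have "c mod n = t mod n" using mod_pred[of t n] assms unfolding c_def by simp
  hence c2: "c = t mod n" using c1 by simp
  have c: "c < n" "c = t mod n" "0 < c" using c1 c2 unfolding c_def by auto
  have tc: "t - c = t div n * n" using c(2) by (simp add: minus_mod_eq_div_mult)
  have "drop (n - c) (take n (drop (t - n) w)) = drop (t - c) w"
  proof -
    have "drop (n - c) (take n (drop (t - n) w)) = take c (drop (n - c) (drop (t - n) w))"
      using c by (simp add: drop_take)
    also have "drop (n - c) (drop (t - n) w) = drop (t - c) w" using c assms by simp
    also have "take c (drop (t - c) w) = drop (t - c) w" using assms c by simp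
    finally show ?thesis .
  qed
  then show ?thesis using assms False tc unfolding c_def[symmetric]
    by (simp add: aug_window avail_def c_def)
qed

lemma rate_aug:
  assumes "length w = t" "n \<le> t" "0 < n"
  shows "rate n (aug_state n w t) = 1 / real (n - t mod n)"
  using assms by (simp add: aug_window rate_def mod_pred')

lemma P_snoc:
  assumes "length w = t" "n \<le> t" "t + 1 \<le> m * n"
  shows "P n m (w @ [a]) = P n m w *
    (if a \<in> avail n (aug_state n w t) then rate n (aug_state n w t) else 0)"
proof -
  have "0 < n" using assms by (metis gr0I le_zero_eq mult_0_right add_is_0 one_neq_zero)
  thus ?thesis using P_snoc_raw[OF assms(1,3)] avail_aug[OF assms(1,2)] rate_aug[OF assms(1,2)]
    by simp
qed





lemma nxt_inj: "nxt n s a = nxt n s b \<Longrightarrow> a = b"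
  by (simp add: nxt_def)

lemma avail_sub: "avail n s \<subseteq> {1..n}"
  by (auto simp: avail_def)

lemma sumK:
  "(\<Sum>a\<in>{1..n}. if nxt n s a = s' then (if a \<in> avail n s then r else 0) else 0)
    = (if s' \<in> nxt n s ` avail n s then r else 0)"
proof -
  let ?B = "{a \<in> avail n s. nxt n s a = s'}"
  have "(\<Sum>a\<in>{1..n}. if nxt n s a = s' then (if a \<in> avail n s then r else 0) else 0)
      = (\<Sum>a\<in>{1..n}. if a \<in> ?B then r else 0)"
    by (rule sum.cong) auto
  also have "\<dots> = (\<Sum>a\<in>{1..n} \<inter> ?B. r)" by (simp add: sum.inter_restrict)
  also have "{1..n} \<inter> ?B = ?B" using avail_sub by blast
  also have "(\<Sum>a\<in>?B. r) = (if s' \<in> nxt n s ` avail n s then r else 0)"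
  proof (cases "s' \<in> nxt n s ` avail n s")
    case True
    then obtain a0 where "a0 \<in> avail n s" "s' = nxt n s a0" by auto
    hence "?B = {a0}" using nxt_inj by blast
    thus ?thesis using True by simp
  next
    case False
    hence e: "?B = {}" by blast
    show ?thesis unfolding e using False by simp
  qed
  finally show ?thesis .
qed

lemma U_Suc: "U n (Suc t) = (\<lambda>(w,a). w @ [a]) ` (U n t \<times> {1..n})"
proof (intro equalityI subsetI)
  fix v assume v: "v \<in> U n (Suc t)"
  hence "v \<noteq> []" by (auto simp: U_def)
  hence "v = butlast v @ [last v]" by simp
  moreover have "butlast v \<in> U n t" using v \<open>v \<noteq> []\<close>
    by (auto simp: U_def dest: in_set_butlastD)
  moreover have "last v \<in> set v" using \<open>v \<noteq> []\<close> by simp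
  hence "last v \<in> {1..n}" using v by (auto simp: U_def)
  ultimately show "v \<in> (\<lambda>(w,a). w @ [a]) ` (U n t \<times> {1..n})" by force
next
  fix v assume "v \<in> (\<lambda>(w,a). w @ [a]) ` (U n t \<times> {1..n})"
  thus "v \<in> U n (Suc t)" by (auto simp: U_def)
qed

lemma markov_step:
  assumes "n \<le> t" "t + 1 \<le> m * n"
  shows "measure_pmf.prob (shuffling n m) {xs. \<forall>i\<in>{n..t+1}. aug_state n xs i = y i}
       = measure_pmf.prob (shuffling n m) {xs. \<forall>i\<in>{n..t}. aug_state n xs i = y i}
         * Kn n (y t) (y (t+1))"
proof -
  have n0: "0 < n" using assms by (metis gr0I le_zero_eq mult_0_right add_is_0 one_neq_zero)
  define F where "F k = {w. \<forall>i\<in>{n..k}. aug_state n w i = y i}" for k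
  have E: "{xs. \<forall>i\<in>{n..k}. aug_state n xs i = y i} = {xs. take k xs \<in> F k}" for k
    unfolding F_def using aug_take by auto
  let ?K = "Kn n (y t) (y (t+1))"
  have L: "measure_pmf.prob (shuffling n m) {xs. \<forall>i\<in>{n..t+1}. aug_state n xs i = y i}
      = (\<Sum>v\<in>U n (Suc t). if v \<in> F (Suc t) then P n m v else 0)"
    unfolding E using assms by (simp add: prob_take_sum sum.inter_restrict U_finite)
  also have "\<dots> = (\<Sum>(w,a)\<in>U n t \<times> {1..n}. if w @ [a] \<in> F (Suc t) then P n m (w @ [a]) else 0)"
    unfolding U_Suc by (subst sum.reindex) (auto simp: inj_on_def case_prod_unfold)
  also have "\<dots> = (\<Sum>w\<in>U n t. \<Sum>a\<in>{1..n}. if w @ [a] \<in> F (Suc t) then P n m (w @ [a]) else 0)"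
    by (rule sum.cartesian_product[symmetric])
  also have "\<dots> = (\<Sum>w\<in>U n t. if w \<in> F t then P n m w * ?K else 0)"
  proof (rule sum.cong[OF refl])
    fix w assume w: "w \<in> U n t"
    hence lw: "length w = t" by (simp add: U_def)
    have memF: "w @ [a] \<in> F (Suc t) \<longleftrightarrow> w \<in> F t \<and> nxt n (aug_state n w t) a = y (Suc t)" for a
    proof -
      have h1: "aug_state n (w @ [a]) i = aug_state n w i" if "i \<in> {n..t}" for i
        using aug_take[of n i t "w @ [a]"] that lw by auto
      have h2: "aug_state n (w @ [a]) (Suc t) = nxt n (aug_state n w t) a"
        using aug_snoc lw assms n0 by simp
      show ?thesis
      proof
        assume A: "w @ [a] \<in> F (Suc t)"
        have "w \<in> F t" unfolding F_def
        proof (intro CollectI ballI)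
          fix i assume "i \<in> {n..t}"
          thus "aug_state n w i = y i" using A h1[of i] unfolding F_def by auto
        qed
        moreover have "nxt n (aug_state n w t) a = y (Suc t)"
          using A h2 assms(1) unfolding F_def by auto
        ultimately show "w \<in> F t \<and> nxt n (aug_state n w t) a = y (Suc t)" by blast
      next
        assume B: "w \<in> F t \<and> nxt n (aug_state n w t) a = y (Suc t)"
        show "w @ [a] \<in> F (Suc t)" unfolding F_def
        proof (intro CollectI ballI)
          fix i assume i: "i \<in> {n..Suc t}"
          show "aug_state n (w @ [a]) i = y i"
          proof (cases "i = Suc t")
            case True thus ?thesis using B h2 by simp
          next
            case False
            hence "i \<in> {n..t}" using i by auto
            thus ?thesis using B h1[of i] unfolding F_def by auto
          qed
        qed
      qed
    qed
    show "(\<Sum>a\<in>{1..n}. if w @ [a] \<in> F (Suc t) then P n m (w @ [a]) else 0)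
        = (if w \<in> F t then P n m w * ?K else 0)"
    proof (cases "w \<in> F t")
      case True
      hence yt: "aug_state n w t = y t" unfolding F_def using assms by auto
      have "(\<Sum>a\<in>{1..n}. if w @ [a] \<in> F (Suc t) then P n m (w @ [a]) else 0)
          = (\<Sum>a\<in>{1..n}. P n m w * (if nxt n (y t) a = y (Suc t) then
               (if a \<in> avail n (y t) then rate n (y t) else 0) else 0))"
        using True memF yt P_snoc[OF lw assms] by (intro sum.cong) auto
      also have "\<dots> = P n m w * ?K"
        by (subst sum_distrib_left[symmetric]) (simp only: sumK Kn_def Suc_eq_plus1)
      finally show ?thesis using True by simp
    next
      case False
      thus ?thesis using memF by simp
    qed
  qed
  also have "\<dots> = (\<Sum>w\<in>U n t \<inter> F t. P n m w) * ?K"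
    by (simp add: sum.inter_restrict[symmetric] U_finite sum_distrib_right if_distrib cong: if_cong)
  also have "(\<Sum>w\<in>U n t \<inter> F t. P n m w) = measure_pmf.prob (shuffling n m) {xs. \<forall>i\<in>{n..t}. aug_state n xs i = y i}"
    unfolding E using assms by (simp add: prob_take_sum)
  finally show ?thesis .
qed



definition bd :: "nat \<Rightarrow> nat list \<Rightarrow> bool" where
  "bd n xs = (\<forall>i j. i < length xs \<longrightarrow> j < length xs \<longrightarrow> i div n = j div n \<longrightarrow> xs ! i = xs ! j \<longrightarrow> i = j)"

lemma bd_concat:
  assumes "set ps \<subseteq> perms n" "0 < n"
  shows "bd n (concat ps)"
  using assms(1)
proof (induction ps)
  case Nil then show ?case by (simp add: bd_def)
next
  case (Cons p ps)
  have p: "distinct p" "length p = n" using Cons.prems perms_length by (auto simp: perms_def)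
  have IH: "bd n (concat ps)" using Cons by simp
  show ?case unfolding bd_def
  proof (intro allI impI)
    fix i j assume i: "i < length (concat (p # ps))" and j: "j < length (concat (p # ps))"
      and d: "i div n = j div n" and e: "concat (p # ps) ! i = concat (p # ps) ! j"
    show "i = j"
    proof (cases "i < n")
      case True
      hence "j < n" using d assms(2)
        by (metis div_less div_eq_0_iff neq0_conv)
      thus ?thesis using True e p by (simp add: nth_append nth_eq_iff_index_eq)
    next
      case False
      hence jn: "\<not> j < n" using d assms(2)
        by (metis div_less div_eq_0_iff neq0_conv)
      have "(i - n) div n = (j - n) div n" using d False jn assms(2)
        by (metis le_div_geq not_less Suc_inject)
      moreover have "concat ps ! (i - n) = concat ps ! (j - n)" using e False jn p by (simp add: nth_append)
      ultimately have "i - n = j - n" using IH i j False jn p unfolding bd_def by auto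
      thus ?thesis using False jn by simp
    qed
  qed
qed

lemma bd_seg:
  assumes "bd n xs" "d + k \<le> length xs" "\<forall>i<k. (d + i) div n = d div n"
  shows "distinct (take k (drop d xs))"
proof -
  have "take k (drop d xs) ! a \<noteq> take k (drop d xs) ! b" if "a < k" "b < k" "a \<noteq> b" for a b
  proof -
    have "(d + a) div n = (d + b) div n" using assms(3) that by simp
    moreover have "d + a < length xs" "d + b < length xs" using that assms(2) by auto
    moreover have H: "\<And>i j. i < length xs \<Longrightarrow> j < length xs \<Longrightarrow> i div n = j div n \<Longrightarrow> xs!i = xs!j \<Longrightarrow> i = j"
      using assms(1) unfolding bd_def by blast
    ultimately have "xs ! (d + a) \<noteq> xs ! (d + b)" using that(3) by (metis add_left_cancel)
    thus ?thesis using that assms(2) by simp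
  qed
  moreover have "length (take k (drop d xs)) = k" using assms(2) by simp
  ultimately show ?thesis by (simp add: distinct_conv_nth)
qed

lemma proper_aug:
  assumes "bd n xs" "set xs \<subseteq> {1..n}" "n \<le> t" "t \<le> length xs" "0 < n"
  shows "proper n (aug_state n xs t)"
proof -
  define q where "q = (t - 1) div n"
  define c where "c = (t - 1) mod n + 1"
  have tqc: "t = q * n + c" unfolding q_def c_def using assms(3,5)
    by (metis Suc_eq_plus1 Suc_pred' add_Suc_right div_mult_mod_eq le_trans less_le_trans not_le zero_less_one le_0_eq not_less)
  have c1: "1 \<le> c" "c \<le> n" unfolding c_def using assms(5) by (auto simp: Suc_le_eq)
  let ?A = "take n (drop (t - n) xs)"
  have aug: "aug_state n xs t = (?A, c)" using assms by (simp add: aug_window c_def)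
  have lA: "length ?A = n" using assms by simp
  have sA: "set ?A \<subseteq> {1..n}" using assms(2)
    by (meson order_trans set_drop_subset set_take_subset)
  have d1: "drop (n - c) ?A = take c (drop (q * n) xs)"
  proof -
    have "drop (n - c) ?A = take c (drop (n - c) (drop (t - n) xs))"
      using c1 by (simp add: drop_take)
    also have "drop (n - c) (drop (t - n) xs) = drop (q * n) xs" using tqc c1 assms(3) by simp
    finally show ?thesis .
  qed
  have D1: "distinct (drop (n - c) ?A)"
    unfolding d1 using assms(1)
  proof (rule bd_seg)
    show "q * n + c \<le> length xs" using tqc assms by simp
    show "\<forall>i<c. (q * n + i) div n = q * n div n"
    proof (intro allI impI)
      fix i assume "i < c"
      show "(q * n + i) div n = q * n div n"
      proof (cases "i < n")
        case True thus ?thesis using assms(5) by simp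
      next
        case False thus ?thesis using \<open>i < c\<close> c1 by simp
      qed
    qed
  qed
  have D2: "distinct (take (n - c) ?A)"
  proof (cases "c = n")
    case True thus ?thesis by simp
  next
    case False
    hence "c < n" using c1 by simp
    hence "1 \<le> q" using tqc assms(3)
      by (metis One_nat_def Suc_leI add_0 gr0I le_less_trans less_le_not_le mult_0 not_le)
    then obtain q' where q': "q = Suc q'" by (metis Suc_le_D One_nat_def)
    have tn: "t - n = q' * n + c" using tqc q' by simp
    have "take (n - c) ?A = take (n - c) (drop (q' * n + c) xs)" using tn by (simp add: min_def)
    also have "distinct \<dots>" using assms(1)
    proof (rule bd_seg)
      show "q' * n + c + (n - c) \<le> length xs" using tn tqc assms \<open>c < n\<close> by simp
      show "\<forall>i<n - c. (q' * n + c + i) div n = (q' * n + c) div n"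
        using \<open>c < n\<close> assms(5) by (simp add: add.assoc)
    qed
    finally show ?thesis .
  qed
  show ?thesis unfolding aug proper_def using lA sA c1 D1 D2 by auto
qed

lemma support_bd: "xs \<in> set_pmf (shuffling n m) \<Longrightarrow> 0 < n \<Longrightarrow> bd n xs"
  by (auto simp: set_shuffling intro: bd_concat)

lemma support_proper:
  assumes "xs \<in> set_pmf (shuffling n m)" "n \<le> t" "t \<le> m * n" "0 < n"
  shows "aug_state n xs t \<in> state_space n"
proof -
  show ?thesis using proper_aug[OF support_bd[OF assms(1,4)] shuffling_set[OF assms(1)]] assms
      shuffling_length[OF assms(1)] by (simp add: state_space_def)
qed

lemma markov_part1:
  assumes "n \<le> t" "t \<le> m * n" "0 < n"
  shows "measure_pmf.prob (shuffling n m) {xs. aug_state n xs t \<in> state_space n} = 1"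
proof -
  let ?M = "shuffling n m"
  have "measure_pmf.prob ?M {xs. aug_state n xs t \<in> state_space n}
      = measure_pmf.prob ?M ({xs. aug_state n xs t \<in> state_space n} \<inter> set_pmf ?M)"
    by (rule measure_Int_set_pmf[symmetric])
  also have "{xs. aug_state n xs t \<in> state_space n} \<inter> set_pmf ?M = UNIV \<inter> set_pmf ?M"
    using support_proper assms by auto
  also have "measure_pmf.prob ?M \<dots> = 1" by (rule trans[OF measure_Int_set_pmf measure_pmf_UNIV])
  finally show ?thesis .
qed

lemma finite_state_space: "finite (state_space n)"
proof -
  have "state_space n \<subseteq> {A. set A \<subseteq> {1..n} \<and> length A = n} \<times> {1..n}"
    by (auto simp: state_space_def proper_def)
  moreover have "finite ({A. set A \<subseteq> {1..n} \<and> length A = n} \<times> {1..n})"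
    by (intro finite_cartesian_product finite_lists_length_eq) auto
  ultimately show ?thesis by (rule finite_subset)
qed




lemma kstep_nonneg:
  assumes "\<And>x y. K x y \<ge> 0"
  shows "kstep K S k x y \<ge> 0"
  by (induction k arbitrary: y) (auto intro!: sum_nonneg mult_nonneg_nonneg assms)

lemma kstep_Suc_ge:
  assumes "\<And>x y. K x y \<ge> 0" "finite S" "z \<in> S"
  shows "kstep K S k x z * K z y \<le> kstep K S (Suc k) x y"
proof -
  have "kstep K S k x z * K z y \<le> (\<Sum>z\<in>S. kstep K S k x z * K z y)"
    using assms kstep_nonneg[of K S k x, OF assms(1)]
    by (intro member_le_sum) (auto intro: mult_nonneg_nonneg)
  thus ?thesis by simp
qed

lemma Kn_nonneg: "Kn n x y \<ge> 0"
  by (simp add: Kn_def rate_def)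

lemma snd_nxt: "snd (nxt n s a) = snd s mod n + 1"
  by (simp add: nxt_def)

lemma Kn_snd: "Kn n z y \<noteq> 0 \<Longrightarrow> snd y = snd z mod n + 1"
  by (auto simp: Kn_def snd_nxt split: if_splits)

lemma kstep_snd:
  assumes "x \<in> state_space n"
  shows "kstep (Kn n) (state_space n) k x y \<noteq> 0 \<Longrightarrow> snd y = (snd x - 1 + k) mod n + 1"
proof (induction k arbitrary: y)
  case 0
  hence "y = x" by (simp split: if_splits)
  moreover have "1 \<le> snd x" "snd x \<le> n" using assms by (auto simp: state_space_def proper_def split: prod.splits)
  ultimately show ?case by simp
next
  case (Suc k)
  then obtain z where z: "z \<in> state_space n" "kstep (Kn n) (state_space n) k x z \<noteq> 0" "Kn n z y \<noteq> 0"
    by (auto elim: sum.not_neutral_contains_not_neutral)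
  have "snd z = (snd x - 1 + k) mod n + 1" using Suc.IH z(2) .
  moreover have "snd y = snd z mod n + 1" using Kn_snd z(3) .
  ultimately show ?case by (simp add: mod_Suc_eq)
qed

lemma kstep_period_dvd:
  assumes "x \<in> state_space n" "kstep (Kn n) (state_space n) k x x > 0" "0 < n"
  shows "n dvd k"
proof -
  have "snd x = (snd x - 1 + k) mod n + 1" using kstep_snd[OF assms(1)] assms(2) by simp
  moreover have "1 \<le> snd x" "snd x \<le> n" using assms by (auto simp: state_space_def proper_def split: prod.splits)
  ultimately have "(snd x - 1 + k) mod n = (snd x - 1) mod n" by simp
  thus ?thesis by (simp add: mod_eq_dvd_iff_nat)
qed


lemma support_path:
  assumes xs: "xs \<in> set_pmf (shuffling n m)" and "n \<le> i" "i \<le> j" "j \<le> m * n" "0 < n"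
  shows "kstep (Kn n) (state_space n) (j - i) (aug_state n xs i) (aug_state n xs j) > 0"
  using assms(3,4)
proof (induction j rule: dec_induct)
  case base
  then show ?case by simp
next
  case (step j)
  let ?y = "aug_state n xs"
  let ?M = "shuffling n m"
  have "measure_pmf.prob ?M {xs} \<le> measure_pmf.prob ?M {xs'. \<forall>l\<in>{n..j+1}. aug_state n xs' l = ?y l}"
    by (rule measure_pmf.finite_measure_mono) auto
  moreover have "measure_pmf.prob ?M {xs} > 0" using xs by (simp add: measure_pmf_single pmf_positive)
  ultimately have "measure_pmf.prob ?M {xs'. \<forall>l\<in>{n..j+1}. aug_state n xs' l = ?y l} \<noteq> 0" by linarith
  hence "Kn n (?y j) (?y (j+1)) \<noteq> 0"
    using markov_step[of n j m ?y] step assms by auto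
  hence K: "Kn n (?y j) (?y (Suc j)) > 0" using Kn_nonneg[of n] by (simp add: order_less_le)
  have S: "?y j \<in> state_space n" using support_proper[OF xs] step assms by simp
  have "0 < kstep (Kn n) (state_space n) (j - i) (?y i) (?y j) * Kn n (?y j) (?y (Suc j))"
    using step K by simp
  also have "\<dots> \<le> kstep (Kn n) (state_space n) (Suc (j - i)) (?y i) (?y (Suc j))"
    by (rule kstep_Suc_ge[OF Kn_nonneg finite_state_space S])
  also have "Suc (j - i) = Suc j - i" using step by simp
  finally show ?case .
qed

definition fill :: "nat \<Rightarrow> nat list \<Rightarrow> nat list" where
  "fill n u = sorted_list_of_set ({1..n} - set u)"

lemma fill_props:
  assumes "distinct u" "set u \<subseteq> {1..n}"
  shows "fill n u @ u \<in> perms n" "u @ fill n u \<in> perms n" "length (fill n u) = n - length u"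
proof -
  have f: "distinct (fill n u)" "set (fill n u) = {1..n} - set u" by (auto simp: fill_def)
  show "fill n u @ u \<in> perms n" "u @ fill n u \<in> perms n" using f assms by (auto simp: perms_def)
  show "length (fill n u) = n - length u"
    using assms by (simp add: fill_def card_Diff_subset distinct_card)
qed

definition Q0 :: "nat \<Rightarrow> nat list \<times> nat \<Rightarrow> nat list" where
  "Q0 n s = fill n (take (n - snd s) (fst s)) @ take (n - snd s) (fst s)"
definition Q1 :: "nat \<Rightarrow> nat list \<times> nat \<Rightarrow> nat list" where
  "Q1 n s = drop (n - snd s) (fst s) @ fill n (drop (n - snd s) (fst s))"

lemma Q_props:
  assumes "s \<in> state_space n"
  shows "Q0 n s \<in> perms n" "Q1 n s \<in> perms n"
    "drop (snd s) (Q0 n s) @ take (snd s) (Q1 n s) = fst s"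
proof -
  obtain A c where s: "s = (A, c)" by force
  have p: "length A = n" "set A \<subseteq> {1..n}" "1 \<le> c" "c \<le> n" "distinct (drop (n - c) A)" "distinct (take (n - c) A)"
    using assms s by (auto simp: state_space_def proper_def)
  have st: "set (take (n - c) A) \<subseteq> {1..n}" "set (drop (n - c) A) \<subseteq> {1..n}"
    using p(2) by (meson order_trans set_take_subset set_drop_subset)+
  show "Q0 n s \<in> perms n" "Q1 n s \<in> perms n"
    using fill_props p st s by (auto simp: Q0_def Q1_def)
  have l1: "length (fill n (take (n - c) A)) = c" using fill_props(3)[OF p(6) st(1)] p by simp
  have "drop c (Q0 n s) = take (n - c) A" using l1 s by (simp add: Q0_def)
  moreover have "take c (Q1 n s) = drop (n - c) A" using p s by (simp add: Q1_def)
  ultimately show "drop (snd s) (Q0 n s) @ take (snd s) (Q1 n s) = fst s" using s by simp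
qed

lemma construct:
  assumes x: "x \<in> state_space n" and x': "x' \<in> state_space n" and mid: "set mid \<subseteq> perms n"
    and n0: "0 < n"
  shows "kstep (Kn n) (state_space n) ((3 + length mid) * n + snd x' - (n + snd x)) x x' > 0"
proof -
  let ?L = "length mid"
  define ps where "ps = [Q0 n x, Q1 n x] @ mid @ [Q0 n x', Q1 n x']"
  define xs where "xs = concat ps"
  have ps: "set ps \<subseteq> perms n" "length ps = 4 + ?L"
    using Q_props[OF x] Q_props[OF x'] mid by (auto simp: ps_def)
  have xsM: "xs \<in> set_pmf (shuffling n (4 + ?L))"
    unfolding set_shuffling xs_def using ps by blast
  have c: "1 \<le> snd x" "snd x \<le> n" "1 \<le> snd x'" "snd x' \<le> n"
    using x x' by (auto simp: state_space_def proper_def split: prod.splits)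
  have lQ: "length (Q0 n x) = n" "length (Q1 n x) = n" "length (Q0 n x') = n" "length (Q1 n x') = n"
    using Q_props[OF x] Q_props[OF x'] perms_length by auto
  have lmid: "length (concat mid) = ?L * n" using length_concat_perms[OF mid] .
  have lxs: "length xs = (4 + ?L) * n" using shuffling_length[OF xsM] .
  define t0 where "t0 = n + snd x"
  define t1 where "t1 = (3 + ?L) * n + snd x'"
  have a0: "aug_state n xs t0 = x"
  proof -
    have "aug_state n xs t0 = (take n (drop (snd x) xs), (t0 - 1) mod n + 1)"
      using lxs c unfolding t0_def by (subst aug_window) (auto simp: algebra_simps)
    also have "take n (drop (snd x) xs) = fst x"
      unfolding xs_def ps_def using lQ c Q_props(3)[OF x] by simp
    also have "(t0 - 1) mod n + 1 = snd x"
    proof -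
      have "t0 - 1 = (snd x - 1) + 1 * n" unfolding t0_def using c by simp
      hence "(t0 - 1) mod n = snd x - 1" using c by (simp only: mod_mult_self1) simp
      thus ?thesis using c by simp
    qed
    finally show ?thesis by simp
  qed
  have a1: "aug_state n xs t1 = x'"
  proof -
    have tn: "t1 - n = (2 + ?L) * n + snd x'" unfolding t1_def by (simp add: algebra_simps)
    have "aug_state n xs t1 = (take n (drop (t1 - n) xs), (t1 - 1) mod n + 1)"
      using lxs c unfolding t1_def by (subst aug_window) (auto simp: algebra_simps)
    also have "t1 - n = (2 + ?L) * n + snd x'" by (rule tn)
    also have "xs = (Q0 n x @ Q1 n x @ concat mid) @ (Q0 n x' @ Q1 n x' @ [])"
      unfolding xs_def ps_def by simp
    also have "take n (drop ((2 + ?L) * n + snd x') \<dots>) = fst x'"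
    proof -
      have "length (Q0 n x @ Q1 n x @ concat mid) = (2 + ?L) * n" using lQ lmid by (simp add: algebra_simps)
      moreover have "drop (length (Q0 n x @ Q1 n x @ concat mid) + snd x') ((Q0 n x @ Q1 n x @ concat mid) @ (Q0 n x' @ Q1 n x' @ []))
          = drop (snd x') (Q0 n x' @ Q1 n x' @ [])" by (simp only: drop_drop[symmetric] drop_append) simp
      ultimately have "drop ((2 + ?L) * n + snd x') ((Q0 n x @ Q1 n x @ concat mid) @ (Q0 n x' @ Q1 n x' @ []))
          = drop (snd x') (Q0 n x' @ Q1 n x' @ [])" by simp
      thus ?thesis using lQ c Q_props(3)[OF x'] by simp
    qed
    also have "(t1 - 1) mod n + 1 = snd x'"
    proof -
      have "t1 - 1 = (snd x' - 1) + (3 + ?L) * n" unfolding t1_def using c by simp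
      hence "(t1 - 1) mod n = snd x' - 1" using c by (simp only: mod_mult_self1) simp
      thus ?thesis using c by simp
    qed
    finally show ?thesis by (simp add: xs_def ps_def)
  qed
  have "kstep (Kn n) (state_space n) (t1 - t0) (aug_state n xs t0) (aug_state n xs t1) > 0"
    using c n0 by (intro support_path[OF xsM]) (auto simp: t0_def t1_def algebra_simps)
  thus ?thesis using a0 a1 unfolding t0_def t1_def by simp
qed


lemma nxt_in_S:
  assumes "s \<in> state_space n" "a \<in> avail n s" "0 < n"
  shows "nxt n s a \<in> state_space n"
proof -
  obtain A c where s: "s = (A, c)" by force
  have p: "length A = n" "set A \<subseteq> {1..n}" "1 \<le> c" "c \<le> n" "distinct (drop (n - c) A)" "distinct (take (n - c) A)"
    using assms s by (auto simp: state_space_def proper_def)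
  have a: "a \<in> {1..n}" using assms(2) by (auto simp: avail_def)
  have "set (tl A) \<subseteq> set A" by (cases A) auto
  hence sA: "set (tl A @ [a]) \<subseteq> {1..n}" using p(2) a by auto
  show ?thesis
  proof (cases "c = n")
    case True
    have "c mod n + 1 = 1" using True assms(3) by simp
    moreover have "drop (n - 1) (tl A @ [a]) = [a]" using p(1) assms(3) by simp
    moreover have "take (n - 1) (tl A @ [a]) = tl A" using p(1) by simp
    moreover have "distinct (tl A)" using p(5) True by (simp add: distinct_tl)
    ultimately show ?thesis using s p sA assms(3) by (simp add: nxt_def state_space_def proper_def)
  next
    case False
    hence cn: "c < n" using p by simp
    have an: "a \<notin> set (drop (n - c) A)" using assms(2) s False by (simp add: avail_def)
    have "c mod n + 1 = c + 1" using cn by simp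
    moreover have "drop (n - (c + 1)) (tl A @ [a]) = drop (n - c) A @ [a]"
    proof -
      have "n - (c + 1) \<le> length (tl A)" using p(1) by simp
      hence "drop (n - (c + 1)) (tl A @ [a]) = drop (n - (c + 1)) (tl A) @ [a]" by simp
      also have "drop (n - (c + 1)) (tl A) = drop (n - c) A"
        using cn by (simp add: drop_Suc[symmetric] tl_drop drop_tl Suc_diff_Suc)
      finally show ?thesis .
    qed
    moreover have "take (n - (c + 1)) (tl A @ [a]) = drop 1 (take (n - c) A)"
    proof -
      have "take (n - (c + 1)) (tl A @ [a]) = take (n - (c + 1)) (tl A)" using p(1) by simp
      also have "\<dots> = drop 1 (take (n - c) A)" using cn
        by (simp add: take_drop[symmetric] drop_Suc tl_take Suc_diff_Suc del: drop_take)
      finally show ?thesis .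
    qed
    ultimately show ?thesis using s p sA an cn
      by (simp add: nxt_def state_space_def proper_def distinct_drop)
  qed
qed

lemma card_avail:
  assumes "s \<in> state_space n" "0 < n"
  shows "card (avail n s) = n - snd s mod n"
proof -
  obtain A c where s: "s = (A, c)" by force
  have p: "length A = n" "set A \<subseteq> {1..n}" "1 \<le> c" "c \<le> n" "distinct (drop (n - c) A)"
    using assms s by (auto simp: state_space_def proper_def)
  show ?thesis
  proof (cases "c = n")
    case True thus ?thesis using s by (simp add: avail_def)
  next
    case False
    hence cn: "c < n" using p by simp
    have "set (drop (n - c) A) \<subseteq> {1..n}" using p(2) by (meson order_trans set_drop_subset)
    moreover have "card (set (drop (n - c) A)) = c" using p by (simp add: distinct_card)
    ultimately show ?thesis using s False cn by (simp add: avail_def card_Diff_subset)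
  qed
qed

lemma Kn_stochastic:
  assumes "s \<in> state_space n" "0 < n"
  shows "(\<Sum>y\<in>state_space n. Kn n s y) = 1"
proof -
  let ?T = "nxt n s ` avail n s"
  have T: "?T \<subseteq> state_space n" using nxt_in_S[OF assms(1) _ assms(2)] by auto
  have "(\<Sum>y\<in>state_space n. Kn n s y) = (\<Sum>y\<in>state_space n \<inter> ?T. rate n s)"
    unfolding Kn_def by (rule sum.inter_restrict[symmetric]) (rule finite_state_space)
  also have "state_space n \<inter> ?T = ?T" using T by blast
  also have "card ?T = card (avail n s)" by (rule card_image) (auto simp: inj_on_def nxt_def)
  hence "(\<Sum>y\<in>?T. rate n s) = real (n - snd s mod n) * rate n s"
    using card_avail[OF assms] by simp
  also have "\<dots> = 1"
  proof -
    have "snd s mod n < n" using assms(2) by simp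
    thus ?thesis by (simp add: rate_def)
  qed
  finally show ?thesis .
qed

lemma period_n:
  assumes "x \<in> state_space n" "0 < n"
  shows "period (Kn n) (state_space n) x = n"
proof -
  let ?Ks = "{k. k > 0 \<and> kstep (Kn n) (state_space n) k x x > 0}"
  have c: "1 \<le> snd x" using assms by (auto simp: state_space_def proper_def split: prod.splits)
  have "kstep (Kn n) (state_space n) ((3 + length ([]::nat list list)) * n + snd x - (n + snd x)) x x > 0"
    by (rule construct[OF assms(1) assms(1) _ assms(2)]) simp
  moreover have "(3 + length ([]::nat list list)) * n + snd x - (n + snd x) = 2 * n" by simp
  ultimately have k2: "2 * n \<in> ?Ks" using assms by simp
  have "kstep (Kn n) (state_space n) ((3 + length [Q0 n x]) * n + snd x - (n + snd x)) x x > 0"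
    using Q_props[OF assms(1)] by (intro construct[OF assms(1) assms(1) _ assms(2)]) simp
  moreover have "(3 + length [Q0 n x]) * n + snd x - (n + snd x) = 3 * n" by simp
  ultimately have k3: "3 * n \<in> ?Ks" using assms by simp
  have g1: "n dvd Gcd ?Ks" using kstep_period_dvd assms by (intro Gcd_greatest) auto
  have g2: "Gcd ?Ks dvd n"
  proof -
    have "Gcd ?Ks dvd 3 * n" "Gcd ?Ks dvd 2 * n" using k2 k3 by (auto intro: Gcd_dvd)
    hence "Gcd ?Ks dvd 3 * n - 2 * n" by (rule dvd_diff_nat)
    thus ?thesis by simp
  qed
  show ?thesis unfolding period_def using dvd_antisym[OF g2 g1] .
qed

theorem propositionH2:
  fixes n :: nat
  assumes "n \<ge> 2"
  shows "finite (state_space n) \<and>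
    (\<exists>K. markov_with n K \<and> stochastic_on K (state_space n) \<and>
         irreducible_on K (state_space n) \<and>
         (\<forall>x\<in>state_space n. period K (state_space n) x = n))"
proof -
  have n0: "0 < n" using assms by simp
  have M: "markov_with n (Kn n)"
    unfolding markov_with_def using markov_part1 markov_step n0 by auto
  have S: "stochastic_on (Kn n) (state_space n)"
    unfolding stochastic_on_def using Kn_nonneg Kn_stochastic n0 by auto
  have I: "irreducible_on (Kn n) (state_space n)"
    unfolding irreducible_on_def
  proof (intro ballI)
    fix x y assume "x \<in> state_space n" "y \<in> state_space n"
    from construct[OF this, of "[]", OF _ n0]
    show "\<exists>k. kstep (Kn n) (state_space n) k x y > 0" by auto
  qed
  show ?thesis using finite_state_space M S I period_n n0 by blast
qed


end
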